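(* In the model below, let $(\mathbf A^\dagger,\mathbf q^\dagger)$ be any maximizer of $\Omega$ over $\mathcal A\times\mathbb R^n_{\ge0}$ and $\mathbf x^\dagger=\mathbf A^\dagger\mathbf q^\dagger$. Then: (i) If $r(\boldsymbol\gamma)\le1\le R(\boldsymbol\gamma)$, then $\mathbf q^\dagger=\boldsymbol\gamma$ and $\mathbf x^\dagger=\boldsymbol\beta$; moreover, unless there exists $\boldsymbol\sigma\in\{-1,1\}^n$ with $\boldsymbol\sigma^\top\boldsymbol\gamma=1$, every such $\mathbf A^\dagger$ has $\operatorname{rank}(\mathbf A^\dagger)\ge2$. (ii) If $R(\boldsymbol\gamma)\le1$, then $q_i^\dagger=\gamma_i+\dfrac{\alpha(1-R(\boldsymbol\gamma))}{1+n\alpha}$ for all $i$, $\mathbf x^\dagger=R(\mathbf q^\dagger)\boldsymbol\beta$, and $\mathbf A^\dagger$ is unique with $\mathbf a_i^\dagger=\boldsymbol\beta$ for all $i$. (iii) If $r(\boldsymbol\gamma)\ge1$ and $i$ is the index with $\gamma_i=\|\boldsymbol\gamma\|_\infty$, then $q_i^\dagger=\gamma_i-\dfrac{\alpha(r(\boldsymbol\gamma)-1)}{1+n\alpha}$ and $q_j^\dagger=\gamma_j+\dfrac{\alpha(r(\boldsymbol\gamma)-1)}{1+n\alpha}$ for all $j\ne i$, $\mathbf x^\dagger=r(\mathbf q^\dagger)\boldsymbol\beta$, and $\mathbf A^\dagger$ is unique with $\mathbf a_i^\dagger=\boldsymbol\beta$ and $\mathbf a_j^\dagger=-\boldsymbol\beta$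 for all $j\ne i$.
   Context: Model: integers $n\ge2$, $m\ge2$; parameters $\alpha>0$, $\boldsymbol\beta\in\mathbb R^m$ with $\|\boldsymbol\beta\|_2=1$, $\boldsymbol\gamma\in\mathbb R^n$ with $\gamma_i>0$ for all $i$. $\mathcal A$ is the set of real $m\times n$ matrices $\mathbf A=[\mathbf a_1,\dots,\mathbf a_n]$ with $\|\mathbf a_i\|_2=1$ for all $i$. With $\mathbf x=\mathbf A\mathbf q$, total surplus is $\Omega(\mathbf A,\mathbf q)=\alpha(\mathbf x^\top\boldsymbol\beta-\tfrac12\mathbf x^\top\mathbf x)+\mathbf q^\top\boldsymbol\gamma-\tfrac12\mathbf q^\top\mathbf q$. For $\mathbf v\in\mathbb R^n$: $R(\mathbf v)=\|\mathbf v\|_1$, $r(\mathbf v)=2\|\mathbf v\|_\infty-\|\mathbf v\|_1$. *)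

theory Defs
  imports "HOL-Analysis.Analysis"
begin

text \<open>Vectors in R^n are real^'n, in R^m are real^'m; an m x n matrix is real^'n^'m
  (m rows, n columns); its i-th column is column i A.\<close>

definition l1norm :: "real^'n \<Rightarrow> real" where
  "l1norm v = (\<Sum>i\<in>UNIV. \<bar>v $ i\<bar>)"

definition linfnorm :: "real^'n \<Rightarrow> real" where
  "linfnorm v = Max ((\<lambda>i. \<bar>v $ i\<bar>) ` UNIV)"

definition Rf :: "real^'n \<Rightarrow> real" where
  "Rf v = l1norm v"

definition rf :: "real^'n \<Rightarrow> real" where
  "rf v = 2 * linfnorm v - l1norm v"

definition unitcols :: "(real^'n^'m) set" where
  "unitcols = {A. \<forall>i. norm (column i A) = 1}"

definition Omega :: "real \<Rightarrow> real^'m \<Rightarrow> real^'n \<Rightarrow> real^'n^'m \<Rightarrow> real^'n \<Rightarrow> real" where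
  "Omega \<alpha> \<beta> \<gamma> A q =
     (let x = A *v q in \<alpha> * (x \<bullet> \<beta> - (1/2) * (x \<bullet> x)) + q \<bullet> \<gamma> - (1/2) * (q \<bullet> q))"

definition is_maximizer :: "real \<Rightarrow> real^'m \<Rightarrow> real^'n \<Rightarrow> real^'n^'m \<Rightarrow> real^'n \<Rightarrow> bool" where
  "is_maximizer \<alpha> \<beta> \<gamma> A q \<longleftrightarrow>
     A \<in> unitcols \<and> (\<forall>i. q $ i \<ge> 0) \<and>
     (\<forall>A' q'. A' \<in> unitcols \<and> (\<forall>i. q' $ i \<ge> 0) \<longrightarrow> Omega \<alpha> \<beta> \<gamma> A' q' \<le> Omega \<alpha> \<beta> \<gamma> A q)"

end

theory Submission
  imports Defs
begin


lemma mv_sum: "(A::real^'n^'m) *v q = (\<Sum>i\<in>UNIV. q$i *\<^sub>R column i A)"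
  by (simp add: matrix_mult_sum scalar_mult_eq_scaleR)

lemma column_mk: "column k ((\<chi> r. \<chi> k. f k $ r)::real^'n^'m) = f k"
  by (simp add: column_def vec_eq_iff)

lemma mk_mv: "((\<chi> r. \<chi> k. f k $ r)::real^'n^'m) *v q = (\<Sum>k\<in>UNIV. q$k *\<^sub>R f k)"
  by (simp add: mv_sum column_mk)

lemma unit_eq:
  fixes a b :: "'a::real_inner"
  assumes "norm a = 1" "norm b = 1" "inner a b \<ge> 1" shows "a = b"
proof -
  have "norm (a - b)^2 = norm a ^2 + norm b^2 - 2 * inner a b"
    by (simp add: power2_norm_eq_inner inner_diff inner_commute)
  also have "\<dots> \<le> 0" using assms by simp
  finally show ?thesis by simp
qed

lemma unit_neg:
  fixes a b :: "'a::real_inner"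
  assumes "norm a = 1" "norm b = 1" "inner a b \<le> -1" shows "a = - b"
  using unit_eq[of a "-b"] assms by simp

lemma Omega_alt:
  fixes \<beta> :: "real^'m" and A :: "real^'n^'m"
  assumes "norm \<beta> = 1"
  shows "Omega \<alpha> \<beta> \<gamma> A q = \<alpha> * (1/2 - 1/2 * (norm (A *v q - \<beta>))^2)
     + 1/2 * (\<Sum>i\<in>UNIV. (\<gamma>$i)^2) - 1/2 * (\<Sum>i\<in>UNIV. (q$i - \<gamma>$i)^2)"
proof -
  have b: "\<beta> \<bullet> \<beta> = 1" using assms by (simp add: dot_square_norm)
  have n: "(norm (A *v q - \<beta>))^2 = (A *v q) \<bullet> (A *v q) - 2 * ((A *v q) \<bullet> \<beta>) + 1"
    using b by (simp add: power2_norm_eq_inner inner_diff inner_commute)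
  have s1: "q \<bullet> \<gamma> - 1/2 * (q \<bullet> q) = (\<Sum>i\<in>UNIV. q$i * \<gamma>$i - 1/2 * (q$i * q$i))"
    by (simp add: inner_vec_def sum_subtractf sum_distrib_left)
  also have "\<dots> = (\<Sum>i\<in>UNIV. 1/2 * (\<gamma>$i)^2 - 1/2 * (q$i - \<gamma>$i)^2)"
    by (rule sum.cong) (auto simp: power2_eq_square algebra_simps)
  also have "\<dots> = 1/2 * (\<Sum>i\<in>UNIV. (\<gamma>$i)^2) - 1/2 * (\<Sum>i\<in>UNIV. (q$i - \<gamma>$i)^2)"
    by (simp add: sum_subtractf sum_distrib_left)
  finally have s: "q \<bullet> \<gamma> - 1/2 * (q \<bullet> q) = 1/2 * (\<Sum>i\<in>UNIV. (\<gamma>$i)^2) - 1/2 * (\<Sum>i\<in>UNIV. (q$i - \<gamma>$i)^2)" .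
  show ?thesis unfolding Omega_def Let_def n using s by (simp add: algebra_simps)
qed



lemma circle_pt:
  fixes z :: complex and g \<rho> :: real
  assumes g: "g > 0" and l: "\<bar>cmod z - g\<bar> \<le> \<rho>" and u: "\<rho> \<le> cmod z + g"
  shows "\<exists>w. cmod w = 1 \<and> cmod (z - of_real g * w) = \<rho>"
proof (cases "z = 0")
  case True
  then have "\<rho> = g" using l u g by auto
  then show ?thesis using True g by (intro exI[of _ 1]) auto
next
  case False
  define r where "r = cmod z"
  have r: "r > 0" using False by (simp add: r_def)
  have rho0: "\<rho> \<ge> 0" using l by linarith
  define c where "c = (r^2 + g^2 - \<rho>^2) / (2*r*g)"
  have sq1: "(r - g)^2 \<le> \<rho>^2" using l rho0 unfolding r_def
    by (metis abs_le_square_iff abs_of_nonneg power2_abs)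
  have sq2: "\<rho>^2 \<le> (r + g)^2" using u rho0 unfolding r_def
    by (simp add: power_mono)
  have c1: "c \<le> 1" using sq1 r g unfolding c_def
    by (simp add: divide_le_eq power2_eq_square algebra_simps)
  have c2: "-1 \<le> c" using sq2 r g unfolding c_def
    by (simp add: le_divide_eq power2_eq_square algebra_simps)
  have cc: "c^2 \<le> 1" using c1 c2 by (metis abs_le_iff abs_square_le_1 minus_le_iff)
  define s where "s = sqrt (1 - c^2)"
  have s2: "s^2 = 1 - c^2" using cc unfolding s_def by simp
  define u where "u = z / of_real r"
  have zu: "z = u * of_real r" using r unfolding u_def by simp
  have cu: "cmod u = 1" using r unfolding u_def r_def by (simp add: norm_divide)
  define w where "w = u * Complex c s"
  have "cmod (Complex c s) = 1" using s2 by (simp add: cmod_def)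
  then have cw: "cmod w = 1" unfolding w_def norm_mult cu by simp
  have "z - of_real g * w = u * Complex (r - g*c) (-(g * s))"
    unfolding zu w_def by (simp add: complex_eq_iff algebra_simps)
  then have "cmod (z - of_real g * w) = cmod u * cmod (Complex (r - g*c) (-(g * s)))"
    by (simp add: norm_mult)
  also have "\<dots> = sqrt ((r - g*c)^2 + (g * s)^2)" using cu by (simp add: cmod_def)
  also have "(r - g*c)^2 + (g * s)^2 = r^2 - 2*r*g*c + g^2"
  proof -
    have "(r - g*c)^2 + (g * s)^2 = r^2 - 2*r*g*c + g^2*(c^2 + s^2)"
      by (simp add: power2_eq_square algebra_simps)
    then show ?thesis using s2 by simp
  qed
  also have "r^2 - 2*r*g*c + g^2 = \<rho>^2" using r g unfolding c_def by (simp add: field_simps)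
  finally show ?thesis using cw rho0 by auto
qed



lemma reach_c:
  fixes g :: "'a \<Rightarrow> real"
  assumes "finite S" "\<forall>k\<in>S. g k > 0"
  shows "cmod z \<le> sum g S \<Longrightarrow> (\<forall>k\<in>S. 2 * g k - sum g S \<le> cmod z) \<Longrightarrow>
    \<exists>w. (\<forall>k. cmod (w k) = 1) \<and> (\<Sum>k\<in>S. of_real (g k) * w k) = z"
  using assms
proof (induction S arbitrary: z rule: finite_induct)
  case empty
  then show ?case by (intro exI[of _ "\<lambda>_. 1"]) auto
next
  case (insert j S)
  define P where "P = sum g S"
  have T: "sum g (insert j S) = g j + P" using insert P_def by simp
  have gj: "g j > 0" using insert by simp
  have gpos: "\<forall>k\<in>S. g k > 0" using insert by simp
  show ?case
  proof (cases "S = {}")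
    case True
    then have "cmod z = g j" using insert(4,5) by auto
    then show ?thesis using True gj
      by (intro exI[of _ "\<lambda>_. z / of_real (g j)"]) (auto simp: norm_divide)
  next
    case False
    define a where "a = Max (insert 0 ((\<lambda>k. 2 * g k - P) ` S))"
    have fin: "finite (insert 0 ((\<lambda>k. 2 * g k - P) ` S))" using insert by simp
    have a0: "a \<ge> 0" unfolding a_def using fin by (rule Max_ge) simp
    have ak: "\<forall>k\<in>S. 2 * g k - P \<le> a" unfolding a_def using fin by (auto intro: Max_ge)
    have ain: "a \<in> insert 0 ((\<lambda>k. 2 * g k - P) ` S)" unfolding a_def using fin by (rule Max_in) simp
    have P0: "P \<ge> 0" unfolding P_def using gpos by (simp add: sum_nonneg less_imp_le)
    have gle: "\<forall>k\<in>S. g k \<le> P" unfolding P_def using gpos insert(1)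
      by (intro ballI member_le_sum) (auto intro: less_imp_le)
    have aP: "a \<le> P" using ain P0 gle by auto
    have az: "a \<le> cmod z + g j" using ain insert(5) T gj
    by (auto simp del: norm_ge_zero) (smt (verit) norm_ge_zero)
    define \<rho> where "\<rho> = max a \<bar>cmod z - g j\<bar>"
    have r1: "\<bar>cmod z - g j\<bar> \<le> \<rho>" unfolding \<rho>_def by simp
    have r2: "\<rho> \<le> cmod z + g j" unfolding \<rho>_def using az gj norm_ge_zero[of z] by (auto simp del: norm_ge_zero)
    have r3: "\<rho> \<le> P" unfolding \<rho>_def using aP insert(4,5) T by auto
    obtain w0 where w0: "cmod w0 = 1" "cmod (z - of_real (g j) * w0) = \<rho>"
      using circle_pt[OF gj r1 r2] by blast
    have "\<exists>w. (\<forall>k. cmod (w k) = 1) \<and> (\<Sum>k\<in>S. of_real (g k) * w k) = z - of_real (g j) * w0"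
      apply (rule insert.IH)
      using w0 r3 ak gpos unfolding P_def \<rho>_def by auto
    then obtain w where w: "\<forall>k. cmod (w k) = 1" "(\<Sum>k\<in>S. of_real (g k) * w k) = z - of_real (g j) * w0"
      by blast
    have "(\<Sum>k\<in>insert j S. of_real (g k) * (w(j := w0)) k) = of_real (g j) * w0 + (\<Sum>k\<in>S. of_real (g k) * w k)"
      using insert(1,2) by (auto intro!: sum.cong)
    then show ?thesis using w w0 by (intro exI[of _ "w(j := w0)"]) auto
  qed
qed



lemma exists_orth:
  fixes \<beta> :: "real^'m"
  assumes m2: "CARD('m) \<ge> 2"
  shows "\<exists>e::real^'m. norm e = 1 \<and> e \<bullet> \<beta> = 0"
proof -
  obtain i :: 'm where True by simp
  have "card (UNIV - {i}) \<ge> 1" using m2 by (simp add: card_Diff_singleton)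
  then obtain j where j: "j \<in> UNIV - {i}" by (metis card.empty all_not_in_conv not_one_le_zero)
  then have ij: "i \<noteq> j" by auto
  show ?thesis
  proof (cases "\<beta>$i = 0")
    case True
    then show ?thesis by (intro exI[of _ "axis i 1"]) (simp add: inner_axis')
  next
    case False
    define v where "v = \<beta>$j *\<^sub>R axis i (1::real) - \<beta>$i *\<^sub>R axis j 1"
    have vb: "v \<bullet> \<beta> = 0" unfolding v_def by (simp add: inner_diff_left inner_axis')
    have "v $ j = - \<beta>$i" unfolding v_def using ij by (simp add: axis_def)
    then have "v \<noteq> 0" using False by auto
    then show ?thesis using vb
      by (intro exI[of _ "v /\<^sub>R norm v"]) (simp add: inner_commute)
  qed
qed

lemma reach_beta:
  fixes \<gamma> :: "real^'n" and \<beta> :: "real^'m"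
  assumes m2: "CARD('m) \<ge> 2" and beta: "norm \<beta> = 1" and gamma: "\<forall>i. \<gamma>$i > 0"
    and lo: "\<forall>k. 2 * \<gamma>$k - (\<Sum>i\<in>UNIV. \<gamma>$i) \<le> 1" and hi: "1 \<le> (\<Sum>i\<in>UNIV. \<gamma>$i)"
  shows "\<exists>B\<in>unitcols. B *v \<gamma> = \<beta>"
proof -
  obtain e :: "real^'m" where e: "norm e = 1" "e \<bullet> \<beta> = 0" using exists_orth[OF m2] by blast
  obtain w where w: "\<forall>k. cmod (w k) = 1" "(\<Sum>k\<in>UNIV. of_real (\<gamma>$k) * w k) = (1::complex)"
    using reach_c[of UNIV "\<lambda>k. \<gamma>$k" 1] gamma lo hi by auto
  define f where "f z = Re z *\<^sub>R \<beta> + Im z *\<^sub>R e" for z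
  have bb: "\<beta> \<bullet> \<beta> = 1" "e \<bullet> e = 1" "\<beta> \<bullet> e = 0" using beta e
    by (auto simp: dot_square_norm inner_commute)
  have nf: "norm (f z) = cmod z" for z
  proof -
    have "(norm (f z))^2 = (Re z)^2 + (Im z)^2"
      unfolding power2_norm_eq_inner f_def using bb
      by (simp add: inner_add_left inner_add_right inner_commute power2_eq_square)
    then show ?thesis by (metis cmod_def norm_ge_zero real_sqrt_unique)
  qed
  define B :: "real^'n^'m" where "B = (\<chi> r. \<chi> k. f (w k) $ r)"
  have cB: "column k B = f (w k)" for k unfolding B_def by (rule column_mk)
  have Bu: "B \<in> unitcols" unfolding unitcols_def using cB nf w(1) by simp
  have re: "(\<Sum>k\<in>UNIV. \<gamma>$k * Re (w k)) = 1" and im: "(\<Sum>k\<in>UNIV. \<gamma>$k * Im (w k)) = 0"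
    using arg_cong[OF w(2), of Re] arg_cong[OF w(2), of Im] by (simp_all add: Re_sum Im_sum)
  have "B *v \<gamma> = (\<Sum>k\<in>UNIV. \<gamma>$k *\<^sub>R f (w k))" unfolding B_def by (rule mk_mv)
  also have "\<dots> = (\<Sum>k\<in>UNIV. \<gamma>$k * Re (w k)) *\<^sub>R \<beta> + (\<Sum>k\<in>UNIV. \<gamma>$k * Im (w k)) *\<^sub>R e"
    unfolding f_def by (simp add: scaleR_add_right sum.distrib scaleR_sum_left)
  also have "\<dots> = \<beta>" using re im by simp
  finally show ?thesis using Bu by blast
qed



lemma norm_mv_le:
  assumes "A \<in> unitcols" "\<forall>i. q$i \<ge> (0::real)"
  shows "norm ((A::real^'n^'m) *v q) \<le> (\<Sum>i\<in>UNIV. q$i)"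
proof -
  have "norm (A *v q) \<le> (\<Sum>i\<in>UNIV. norm (q$i *\<^sub>R column i A))"
    unfolding mv_sum by (rule norm_sum)
  also have "\<dots> = (\<Sum>i\<in>UNIV. q$i)" using assms unfolding unitcols_def by simp
  finally show ?thesis .
qed

lemma inner_mv: "u \<bullet> ((A::real^'n^'m) *v q) = (\<Sum>k\<in>UNIV. q$k * (u \<bullet> column k A))"
  unfolding mv_sum by (simp add: inner_sum_right)

lemma unit_inner_ge:
  fixes a b :: "'a::real_inner"
  assumes "norm a = 1" "norm b = 1" shows "-1 \<le> a \<bullet> b" "a \<bullet> b \<le> 1"
proof -
  have "\<bar>a \<bullet> b\<bar> \<le> 1" using Cauchy_Schwarz_ineq2[of a b] assms by simp
  then show "-1 \<le> a \<bullet> b" "a \<bullet> b \<le> 1" by auto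
qed

lemma key_ineq:
  fixes \<alpha> \<rho> c D u m :: real
  assumes "\<alpha> > 0" "\<rho> \<ge> 0" "c = \<alpha> * \<rho>" "m = max 0 (\<rho> - u)"
    and "- (\<alpha>/2) * \<rho>^2 \<le> - (\<alpha>/2) * m^2 - 1/2 * D - c * u"
  shows "D \<le> 0"
proof (cases "\<rho> - u \<ge> 0")
  case True
  then have "m = \<rho> - u" using assms(4) by simp
  then have "m^2 = (\<rho> - u)^2" by simp
  also have "\<dots> = \<rho>^2 - 2*\<rho>*u + u^2" by (simp add: power2_diff)
  finally have "m^2 = \<rho>^2 - 2*\<rho>*u + u^2" .
  then have "\<alpha> * m^2 = \<alpha> * \<rho>^2 - 2 * (\<alpha> * \<rho>) * u + \<alpha> * u^2"
    by (metis (mono_tags, lifting) diff_add_eq distrib_left mult.assoc mult.left_commute right_diff_distrib)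
  then have "D \<le> - \<alpha> * u^2" using assms(3,5) by (simp add: algebra_simps del: mult_minus_left) 
  moreover have "\<alpha> * u^2 \<ge> 0" using assms(1) by simp
  ultimately show ?thesis by linarith
next
  case False
  then have "m = 0" using assms(4) by simp
  then have "D \<le> \<alpha> * \<rho> * (\<rho> - 2*u)" using assms(3,5) by (simp add: algebra_simps power2_eq_square)
  moreover have "\<alpha> * \<rho> * (\<rho> - 2*u) \<le> 0"
    using False assms(1,2) by (intro mult_nonneg_nonpos) auto
  ultimately show ?thesis by linarith
qed

lemma sum_sq_shift:
  fixes q s \<gamma> :: "real^'n"
  assumes "\<forall>i. s$i = \<gamma>$i + c * l i"
  shows "(\<Sum>i\<in>UNIV. (q$i - \<gamma>$i)^2) = (\<Sum>i\<in>UNIV. (q$i - s$i)^2) + 2 * c * (\<Sum>i\<in>UNIV. l i * (q$i - s$i))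
     + c^2 * (\<Sum>i\<in>UNIV. (l i)^2)"
proof -
  have "(\<Sum>i\<in>UNIV. (q$i - \<gamma>$i)^2) = (\<Sum>i\<in>UNIV. (q$i - s$i)^2 + 2 * c * (l i * (q$i - s$i)) + c^2 * (l i)^2)"
    using assms by (intro sum.cong) (auto simp: power2_eq_square algebra_simps)
  then show ?thesis by (simp add: sum.distrib sum_distrib_left)
qed

lemma sum_sq_zero:
  fixes q s :: "real^'n"
  assumes "(\<Sum>i\<in>UNIV. (q$i - s$i)^2) \<le> 0" shows "q = s"
proof -
  have "\<forall>i\<in>UNIV. (q$i - s$i)^2 = 0"
    using assms sum_nonneg_eq_0_iff[of UNIV "\<lambda>i. (q$i - s$i)^2"]
    by (simp add: antisym sum_nonneg)
  then show ?thesis by (simp add: vec_eq_iff)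
qed



lemma nonneg_terms_zero:
  fixes f :: "'n::finite \<Rightarrow> real"
  assumes "\<forall>k. f k \<ge> 0" "(\<Sum>k\<in>UNIV. f k) \<le> 0" shows "\<forall>k. f k = 0"
  using assms sum_nonneg_eq_0_iff[of UNIV f] by (simp add: antisym sum_nonneg)

lemma part2:
  fixes \<alpha> :: real and \<beta> :: "real^'m" and \<gamma> :: "real^'n"
    and A :: "real^'n^'m" and q :: "real^'n"
  assumes alpha: "\<alpha> > 0" and beta: "norm \<beta> = 1" and gamma: "\<forall>i. \<gamma> $ i > 0"
    and maxi: "is_maximizer \<alpha> \<beta> \<gamma> A q" and hyp: "Rf \<gamma> \<le> 1"
  shows "(\<forall>i. q $ i = \<gamma> $ i + \<alpha> * (1 - Rf \<gamma>) / (1 + real CARD('n) * \<alpha>)) \<and>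
        A *v q = Rf q *\<^sub>R \<beta> \<and> (\<forall>i. column i A = \<beta>)"
proof -
  have Au: "A \<in> unitcols" and qn: "\<forall>i. q$i \<ge> 0"
    and opt: "\<And>A' q'. A' \<in> unitcols \<Longrightarrow> (\<forall>i. q'$i \<ge> 0) \<Longrightarrow> Omega \<alpha> \<beta> \<gamma> A' q' \<le> Omega \<alpha> \<beta> \<gamma> A q"
    using maxi unfolding is_maximizer_def by auto
  define N where "N = real CARD('n)"
  have N0: "N > 0" unfolding N_def by simp
  define S0 where "S0 = (\<Sum>i\<in>UNIV. \<gamma>$i)"
  have RfS: "Rf \<gamma> = S0" unfolding Rf_def l1norm_def S0_def using gamma
    by (intro sum.cong) (auto simp: less_imp_le)
  define c where "c = \<alpha> * (1 - Rf \<gamma>) / (1 + N * \<alpha>)"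
  define \<rho> where "\<rho> = (1 - S0) / (1 + N * \<alpha>)"
  have den: "1 + N * \<alpha> > 0" using N0 alpha by (simp add: add_pos_pos)
  have c\<rho>: "c = \<alpha> * \<rho>" unfolding c_def \<rho>_def RfS by simp
  have \<rho>0: "\<rho> \<ge> 0" unfolding \<rho>_def using hyp RfS den by simp
  have c0: "c \<ge> 0" using c\<rho> \<rho>0 alpha by simp
  define qs :: "real^'n" where "qs = (\<chi> i. \<gamma>$i + c)"
  have qsi: "\<forall>i. qs$i = \<gamma>$i + c * 1" unfolding qs_def by simp
  have qspos: "\<forall>i. qs$i > 0" using gamma c0 unfolding qs_def by (simp add: add_pos_nonneg)
  have sqs: "(\<Sum>i\<in>UNIV. qs$i) = S0 + N * c" unfolding qs_def S0_def N_def by (simp add: sum.distrib)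
  have r1: "1 - (\<Sum>i\<in>UNIV. qs$i) = \<rho>" unfolding sqs c\<rho> \<rho>_def using den by (simp add: field_simps)
  define B :: "real^'n^'m" where "B = (\<chi> r. \<chi> k. (\<lambda>_. \<beta>) k $ r)"
  have Bu: "B \<in> unitcols" unfolding unitcols_def B_def using column_mk beta by (simp add: column_mk)
  have Bq: "B *v v = (\<Sum>i\<in>UNIV. v$i) *\<^sub>R \<beta>" for v unfolding B_def mk_mv by (simp add: scaleR_sum_left)
  have G: "Omega \<alpha> \<beta> \<gamma> B qs \<le> Omega \<alpha> \<beta> \<gamma> A q" using opt[OF Bu] qspos by (simp add: less_imp_le)
  have nB: "norm (B *v qs - \<beta>) = \<rho>" unfolding Bq using r1 \<rho>0
    by (metis abs_minus_commute abs_of_nonneg norm_scaleR norm_minus_commute scaleR_diff_left scaleR_one beta mult_1_right)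
  have cs: "(\<Sum>i\<in>UNIV. (qs$i - \<gamma>$i)^2) = N * c^2" unfolding qs_def N_def by simp
  have OmB: "Omega \<alpha> \<beta> \<gamma> B qs = \<alpha> * (1/2 - 1/2 * \<rho>^2) + 1/2 * (\<Sum>i\<in>UNIV. (\<gamma>$i)^2) - 1/2 * (N * c^2)"
    unfolding Omega_alt[OF beta] nB cs ..
  define x where "x = A *v q"
  define u where "u = (\<Sum>i\<in>UNIV. q$i) - (\<Sum>i\<in>UNIV. qs$i)"
  define m where "m = max 0 (\<rho> - u)"
  have xle: "norm x \<le> (\<Sum>i\<in>UNIV. q$i)" unfolding x_def using Au qn by (rule norm_mv_le)
  have "norm (x - \<beta>) \<ge> 1 - norm x" using norm_triangle_ineq2[of \<beta> x] beta by (simp add: norm_minus_commute)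
  then have "norm (x - \<beta>) \<ge> m" unfolding m_def u_def using xle r1 by auto
  moreover have "m \<ge> 0" unfolding m_def by simp
  ultimately have xm: "(norm (x - \<beta>))^2 \<ge> m^2" by (simp add: power_mono)
  have sh: "(\<Sum>i\<in>UNIV. (q$i - \<gamma>$i)^2) = (\<Sum>i\<in>UNIV. (q$i - qs$i)^2) + 2 * c * u + c^2 * N"
    using sum_sq_shift[OF qsi, of q] unfolding u_def N_def by (simp add: sum_subtractf)
  have OmA: "Omega \<alpha> \<beta> \<gamma> A q = \<alpha> * (1/2 - 1/2 * (norm (x - \<beta>))^2) + 1/2 * (\<Sum>i\<in>UNIV. (\<gamma>$i)^2)
     - 1/2 * (\<Sum>i\<in>UNIV. (q$i - \<gamma>$i)^2)" unfolding x_def by (rule Omega_alt[OF beta])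
  have "\<alpha> * (norm (x - \<beta>))^2 \<ge> \<alpha> * m^2" using xm alpha by simp
  then have "- (\<alpha>/2) * \<rho>^2 \<le> - (\<alpha>/2) * m^2 - 1/2 * (\<Sum>i\<in>UNIV. (q$i - qs$i)^2) - c * u"
    using G unfolding OmB OmA sh by (simp add: algebra_simps)
  then have "(\<Sum>i\<in>UNIV. (q$i - qs$i)^2) \<le> 0" using key_ineq[OF alpha \<rho>0 c\<rho> m_def] by blast
  then have qq: "q = qs" by (rule sum_sq_zero)
  
  have G2: "\<alpha> * (1/2 - 1/2 * \<rho>^2) + 1/2 * (\<Sum>i\<in>UNIV. (\<gamma>$i)^2) - 1/2 * (N * c^2) \<le>
     \<alpha> * (1/2 - 1/2 * (norm (x - \<beta>))^2) + 1/2 * (\<Sum>i\<in>UNIV. (\<gamma>$i)^2)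
     - 1/2 * (\<Sum>i\<in>UNIV. (q$i - \<gamma>$i)^2)" using G unfolding OmB OmA .
  have cs2: "(\<Sum>i\<in>UNIV. (q$i - \<gamma>$i)^2) = N * c^2" using cs qq by simp
  have "\<alpha> * (norm (x - \<beta>))^2 \<le> \<alpha> * \<rho>^2" using G2 unfolding cs2 by (simp add: right_diff_distrib)
  then have "(norm (x - \<beta>))^2 \<le> \<rho>^2" using alpha by simp
  then have nx: "norm (x - \<beta>) \<le> \<rho>" using \<rho>0 by (simp add: power2_le_iff_abs_le)
  have "1 - \<beta> \<bullet> x = \<beta> \<bullet> (\<beta> - x)" using beta by (simp add: inner_diff_right dot_square_norm)
  also have "\<dots> \<le> norm (x - \<beta>)" using Cauchy_Schwarz_ineq2[of \<beta> "\<beta> - x"] beta by (simp add: norm_minus_commute)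
  finally have "1 - \<beta> \<bullet> x \<le> 1 - (\<Sum>i\<in>UNIV. qs$i)" using nx r1 by linarith
  then have "(\<Sum>k\<in>UNIV. qs$k * (1 - \<beta> \<bullet> column k A)) \<le> 0"
  proof -
    have "(\<Sum>k\<in>UNIV. qs$k * (1 - \<beta> \<bullet> column k A)) = (\<Sum>k\<in>UNIV. qs$k) - (\<Sum>k\<in>UNIV. qs$k * (\<beta> \<bullet> column k A))"
      by (simp add: right_diff_distrib sum_subtractf)
    moreover have "\<beta> \<bullet> x = (\<Sum>k\<in>UNIV. qs$k * (\<beta> \<bullet> column k A))" unfolding x_def inner_mv qq ..
    ultimately show ?thesis using \<open>1 - \<beta> \<bullet> x \<le> 1 - (\<Sum>i\<in>UNIV. qs$i)\<close> by linarith
  qed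
  moreover have "\<forall>k. qs$k * (1 - \<beta> \<bullet> column k A) \<ge> 0"
    using qspos unit_inner_ge(2)[OF beta] Au unfolding unitcols_def by (simp add: less_imp_le)
  ultimately have z: "\<forall>k. qs$k * (1 - \<beta> \<bullet> column k A) = 0" by (rule nonneg_terms_zero[rotated])
  have cols: "\<forall>k. column k A = \<beta>"
  proof
    fix k
    have "qs$k \<noteq> 0" using qspos by (metis less_irrefl)
    then have "\<beta> \<bullet> column k A = 1" using z[rule_format, of k] by simp
    then show "column k A = \<beta>" using unit_eq[of "column k A" \<beta>] beta Au unfolding unitcols_def
      by (simp add: inner_commute)
  qed
  have "A *v q = (\<Sum>i\<in>UNIV. q$i) *\<^sub>R \<beta>" unfolding mv_sum using cols by (simp add: scaleR_sum_left)
  moreover have "Rf q = (\<Sum>i\<in>UNIV. q$i)" unfolding Rf_def l1norm_def qq using qspos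
    by (intro sum.cong) (auto simp: less_imp_le)
  moreover have "\<forall>i. q $ i = \<gamma> $ i + \<alpha> * (1 - Rf \<gamma>) / (1 + real CARD('n) * \<alpha>)"
    unfolding qq qs_def c_def N_def by simp
  ultimately show ?thesis using cols by simp
qed



lemma L_eq: "(\<Sum>k\<in>UNIV. (if k = i then 1 else -1) * (v::real^'n)$k) = 2 * v$i - (\<Sum>k\<in>UNIV. v$k)"
proof -
  have "(\<Sum>k\<in>UNIV. (if k = i then 1 else -1) * v$k) = (\<Sum>k\<in>UNIV. 2 * (if k = i then v$k else 0) - v$k)"
    by (intro sum.cong) auto
  also have "\<dots> = 2 * v$i - (\<Sum>k\<in>UNIV. v$k)" by (simp add: sum_subtractf sum_distrib_left[symmetric])
  finally show ?thesis .
qed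

lemma sum_ge_pair:
  fixes v :: "'n::finite \<Rightarrow> real"
  assumes "\<forall>k. k \<noteq> i \<longrightarrow> v k \<ge> 0"
  shows "v i + (if j = i then 0 else v j) \<le> (\<Sum>k\<in>UNIV. v k)"
proof -
  have "v i + (if j = i then 0 else v j) = (\<Sum>k\<in>UNIV. (if k = i then v k else 0) + (if k = j \<and> j \<noteq> i then v k else 0))"
    by (simp add: sum.distrib)
  also have "\<dots> \<le> (\<Sum>k\<in>UNIV. v k)" using assms by (intro sum_mono) auto
  finally show ?thesis .
qed

lemma part3:
  fixes \<alpha> :: real and \<beta> :: "real^'m" and \<gamma> :: "real^'n"
    and A :: "real^'n^'m" and q :: "real^'n"
  assumes alpha: "\<alpha> > 0" and beta: "norm \<beta> = 1" and gamma: "\<forall>i. \<gamma> $ i > 0"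
    and maxi: "is_maximizer \<alpha> \<beta> \<gamma> A q" and hyp: "rf \<gamma> \<ge> 1" and gi: "\<gamma> $ i = linfnorm \<gamma>"
  shows "q $ i = \<gamma> $ i - \<alpha> * (rf \<gamma> - 1) / (1 + real CARD('n) * \<alpha>) \<and>
        (\<forall>j. j \<noteq> i \<longrightarrow> q $ j = \<gamma> $ j + \<alpha> * (rf \<gamma> - 1) / (1 + real CARD('n) * \<alpha>)) \<and>
        A *v q = rf q *\<^sub>R \<beta> \<and>
        column i A = \<beta> \<and> (\<forall>j. j \<noteq> i \<longrightarrow> column j A = - \<beta>)"
proof -
  have Au: "A \<in> unitcols" and qn: "\<forall>i. q$i \<ge> 0"
    and opt: "\<And>A' q'. A' \<in> unitcols \<Longrightarrow> (\<forall>i. q'$i \<ge> 0) \<Longrightarrow> Omega \<alpha> \<beta> \<gamma> A' q' \<le> Omega \<alpha> \<beta> \<gamma> A q"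
    using maxi unfolding is_maximizer_def by auto
  have au: "\<forall>k. norm (column k A) = 1" using Au unfolding unitcols_def by simp
  define N where "N = real CARD('n)"
  have N0: "N > 0" unfolding N_def by simp
  define l :: "'n \<Rightarrow> real" where "l k = (if k = i then 1 else -1)" for k
  define L where "L v = (\<Sum>k\<in>UNIV. l k * v$k)" for v :: "real^'n"
  have Lv: "L v = 2 * v$i - (\<Sum>k\<in>UNIV. v$k)" for v unfolding L_def l_def by (rule L_eq)
  have l1: "(l k)^2 = 1" for k by (simp add: l_def)
  have l2: "(\<Sum>k\<in>UNIV. (l k)^2) = N" unfolding l1 N_def by simp
  have rfg: "rf \<gamma> = L \<gamma>" unfolding rf_def l1norm_def Lv gi[symmetric] using gamma
    by (simp add: less_imp_le)
  define c where "c = \<alpha> * (rf \<gamma> - 1) / (1 + N * \<alpha>)"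
  define \<rho> where "\<rho> = (rf \<gamma> - 1) / (1 + N * \<alpha>)"
  have den: "1 + N * \<alpha> > 0" using N0 alpha by (simp add: add_pos_pos)
  have c\<rho>: "c = \<alpha> * \<rho>" unfolding c_def \<rho>_def by simp
  have \<rho>0: "\<rho> \<ge> 0" unfolding \<rho>_def using hyp den by simp
  have c0: "c \<ge> 0" using c\<rho> \<rho>0 alpha by simp
  define qs :: "real^'n" where "qs = (\<chi> k. \<gamma>$k - c * l k)"
  have qsi: "\<forall>k. qs$k = \<gamma>$k + (- c) * l k" unfolding qs_def by simp
  have Lqs: "L qs = L \<gamma> - c * N" unfolding L_def qs_def l2[symmetric]
    by (simp add: right_diff_distrib sum_subtractf sum_distrib_left power2_eq_square algebra_simps)
  have r1: "L qs - 1 = \<rho>" unfolding Lqs rfg[symmetric] c\<rho> \<rho>_def using den by (simp add: field_simps)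
  have qsj: "qs$k > 0" if "k \<noteq> i" for k using gamma c0 that unfolding qs_def l_def by (simp add: add_pos_nonneg)
  have qsi_ge: "qs$i \<ge> 1 + (if j = i then 0 else qs$j)" for j
  proof -
    have "qs$i + (if j = i then 0 else qs$j) \<le> (\<Sum>k\<in>UNIV. qs$k)"
      using qsj by (intro sum_ge_pair) (simp add: less_imp_le)
    then show ?thesis using r1 \<rho>0 unfolding Lv by linarith
  qed
  have qspos: "\<forall>k. qs$k > 0"
  proof
    fix k show "qs$k > 0"
    proof (cases "k = i")
      case True then show ?thesis using qsi_ge[of i] by simp
    next
      case False then show ?thesis using qsj by simp
    qed
  qed
  define f where "f k = l k *\<^sub>R \<beta>" for k
  define B :: "real^'n^'m" where "B = (\<chi> r. \<chi> k. f k $ r)"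
  have cB: "column k B = f k" for k unfolding B_def by (rule column_mk)
  have Bu: "B \<in> unitcols" unfolding unitcols_def using beta by (simp add: cB f_def l_def)
  have Bq: "B *v v = L v *\<^sub>R \<beta>" for v unfolding B_def mk_mv L_def f_def by (simp add: scaleR_sum_left mult.commute)
  have G: "Omega \<alpha> \<beta> \<gamma> B qs \<le> Omega \<alpha> \<beta> \<gamma> A q" using opt[OF Bu] qspos by (simp add: less_imp_le)
  have nB: "norm (B *v qs - \<beta>) = \<rho>" unfolding Bq
  proof -
    have "L qs *\<^sub>R \<beta> - \<beta> = (L qs - 1) *\<^sub>R \<beta>" by (simp add: scaleR_diff_left)
    then show "norm (L qs *\<^sub>R \<beta> - \<beta>) = \<rho>" using r1 \<rho>0 beta by simp
  qed
  have cs: "(\<Sum>k\<in>UNIV. (qs$k - \<gamma>$k)^2) = c^2 * N" unfolding qs_def l2[symmetric]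
    by (simp add: power2_eq_square sum_distrib_left algebra_simps)
  have OmB: "Omega \<alpha> \<beta> \<gamma> B qs = \<alpha> * (1/2 - 1/2 * \<rho>^2) + 1/2 * (\<Sum>i\<in>UNIV. (\<gamma>$i)^2) - 1/2 * (c^2 * N)"
    unfolding Omega_alt[OF beta] nB cs ..
  define x where "x = A *v q"
  have aix: "column i A \<bullet> x = (\<Sum>k\<in>UNIV. q$k * (column i A \<bullet> column k A))" unfolding x_def by (rule inner_mv)
  have lk: "l k \<le> column i A \<bullet> column k A" for k
    using unit_inner_ge(1)[OF au[rule_format, of i] au[rule_format, of k]] au
    by (auto simp: l_def dot_square_norm)
  have Lle: "L q \<le> column i A \<bullet> x" unfolding aix L_def
  proof (intro sum_mono)
    fix k
    have "q$k * l k \<le> q$k * (column i A \<bullet> column k A)" using qn lk[of k] by (simp add: mult_left_mono)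
    then show "l k * q$k \<le> q$k * (column i A \<bullet> column k A)" by (simp add: mult.commute)
  qed
  have aixn: "column i A \<bullet> x \<le> norm x"
    using Cauchy_Schwarz_ineq2[of "column i A" x] au by simp
  define u where "u = L q - L qs"
  define m where "m = max 0 (\<rho> - (-u))"
  have "norm (x - \<beta>) \<ge> norm x - 1" using norm_triangle_ineq2[of x \<beta>] beta by simp
  then have "norm (x - \<beta>) \<ge> m" unfolding m_def u_def using Lle aixn r1 by auto
  moreover have "m \<ge> 0" unfolding m_def by simp
  ultimately have xm: "(norm (x - \<beta>))^2 \<ge> m^2" by (simp add: power_mono)
  have sh0: "(\<Sum>k\<in>UNIV. l k * (q$k - qs$k)) = u" unfolding u_def L_def
    by (simp add: right_diff_distrib sum_subtractf)
  have sh: "(\<Sum>k\<in>UNIV. (q$k - \<gamma>$k)^2) = (\<Sum>k\<in>UNIV. (q$k - qs$k)^2) - 2 * (c * u) + c^2 * N"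
    using sum_sq_shift[OF qsi, of q] unfolding sh0 l2 by simp
  have OmA: "Omega \<alpha> \<beta> \<gamma> A q = \<alpha> * (1/2 - 1/2 * (norm (x - \<beta>))^2) + 1/2 * (\<Sum>i\<in>UNIV. (\<gamma>$i)^2)
     - 1/2 * (\<Sum>i\<in>UNIV. (q$i - \<gamma>$i)^2)" unfolding x_def by (rule Omega_alt[OF beta])
  have G2: "\<alpha> * (1/2 - 1/2 * \<rho>^2) + 1/2 * (\<Sum>i\<in>UNIV. (\<gamma>$i)^2) - 1/2 * (c^2 * N) \<le>
     \<alpha> * (1/2 - 1/2 * (norm (x - \<beta>))^2) + 1/2 * (\<Sum>i\<in>UNIV. (\<gamma>$i)^2)
     - 1/2 * (\<Sum>i\<in>UNIV. (q$i - \<gamma>$i)^2)" using G unfolding OmB OmA .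
  have "\<alpha> * (norm (x - \<beta>))^2 \<ge> \<alpha> * m^2" using xm alpha by simp
  then have "- (\<alpha>/2) * \<rho>^2 \<le> - (\<alpha>/2) * m^2 - 1/2 * (\<Sum>i\<in>UNIV. (q$i - qs$i)^2) - c * (-u)"
    using G2 unfolding sh by (simp add: right_diff_distrib) argo
  then have "(\<Sum>i\<in>UNIV. (q$i - qs$i)^2) \<le> 0" using key_ineq[OF alpha \<rho>0 c\<rho> m_def] by blast
  then have qq: "q = qs" by (rule sum_sq_zero)
  
  have cs2: "(\<Sum>i\<in>UNIV. (q$i - \<gamma>$i)^2) = c^2 * N" using cs qq by simp
  have "\<alpha> * (norm (x - \<beta>))^2 \<le> \<alpha> * \<rho>^2" using G2 unfolding cs2 by (simp add: right_diff_distrib)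
  then have "(norm (x - \<beta>))^2 \<le> \<rho>^2" using alpha by simp
  then have nx: "norm (x - \<beta>) \<le> \<rho>" using \<rho>0 by (simp add: power2_le_iff_abs_le)
  have Lq: "L q = 1 + \<rho>" using r1 qq by simp
  have "norm x \<le> norm (x - \<beta>) + 1" using norm_triangle_ineq[of "x - \<beta>" \<beta>] beta by simp
  then have "column i A \<bullet> x \<le> L q" using nx Lq aixn by linarith
  then have "(\<Sum>k\<in>UNIV. q$k * (column i A \<bullet> column k A - l k)) \<le> 0"
    unfolding aix L_def by (simp add: right_diff_distrib sum_subtractf mult.commute)
  moreover have "\<forall>k. q$k * (column i A \<bullet> column k A - l k) \<ge> 0" using qn lk by simp
  ultimately have z: "\<forall>k. q$k * (column i A \<bullet> column k A - l k) = 0" by (rule nonneg_terms_zero[rotated])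
  have colk: "column k A = - column i A" if "k \<noteq> i" for k
  proof -
    have "q$k \<noteq> 0" using qspos qq by (metis less_irrefl)
    then have "column i A \<bullet> column k A = -1" using z[rule_format, of k] that by (simp add: l_def)
    then show ?thesis using unit_neg[of "column k A" "column i A"] au by (simp add: inner_commute)
  qed
  have xL: "x = L q *\<^sub>R column i A"
  proof -
    have "x = (\<Sum>k\<in>UNIV. q$k *\<^sub>R (l k *\<^sub>R column i A))" unfolding x_def mv_sum
      by (intro sum.cong) (auto simp: l_def colk)
    then show ?thesis unfolding L_def by (simp add: scaleR_sum_left mult.commute)
  qed
  have "(norm (x - \<beta>))^2 = (x - \<beta>) \<bullet> (x - \<beta>)" by (simp add: power2_norm_eq_inner)
  also have "\<dots> = x \<bullet> x - 2 * (x \<bullet> \<beta>) + \<beta> \<bullet> \<beta>" by (simp add: inner_diff inner_commute)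
  also have "x \<bullet> x = (L q)^2 * (column i A \<bullet> column i A)" unfolding xL by (simp add: power2_eq_square)
  also have "column i A \<bullet> column i A = 1" using au by (simp add: dot_square_norm)
  also have "x \<bullet> \<beta> = L q * (column i A \<bullet> \<beta>)" unfolding xL by simp
  also have "\<beta> \<bullet> \<beta> = 1" using beta by (simp add: dot_square_norm)
  finally have "(norm (x - \<beta>))^2 = (L q)^2 - 2 * L q * (column i A \<bullet> \<beta>) + 1" by simp
  moreover have "(norm (x - \<beta>))^2 \<le> (L q - 1)^2" using nx Lq \<rho>0 by (simp add: power_mono)
  ultimately have "2 * L q * (column i A \<bullet> \<beta>) \<ge> 2 * L q * 1" by (simp add: power2_eq_square algebra_simps)
  moreover have "L q > 0" using Lq \<rho>0 by simp
  ultimately have "column i A \<bullet> \<beta> \<ge> 1" by simp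
  then have ci: "column i A = \<beta>" using unit_eq[of "column i A" \<beta>] au beta by simp
  have lin: "linfnorm q = q$i"
    unfolding linfnorm_def
  proof (rule Max_eqI)
    fix y assume "y \<in> range (\<lambda>k. \<bar>q$k\<bar>)"
    then obtain k where "y = \<bar>q$k\<bar>" by auto
    then show "y \<le> q$i" using qsi_ge[of k] qq qn by (auto split: if_splits)
  next
    show "q$i \<in> range (\<lambda>k. \<bar>q$k\<bar>)" using qn by (metis abs_of_nonneg rangeI)
  qed simp
  have rfq: "rf q = L q" unfolding rf_def l1norm_def lin Lv using qn by simp
  show ?thesis
    using ci colk xL rfq qq unfolding x_def qs_def c_def N_def l_def by auto
qed



lemma part1:
  fixes \<alpha> :: real and \<beta> :: "real^'m" and \<gamma> :: "real^'n"
    and A :: "real^'n^'m" and q :: "real^'n"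
  assumes m2: "CARD('m) \<ge> 2"
    and alpha: "\<alpha> > 0" and beta: "norm \<beta> = 1" and gamma: "\<forall>i. \<gamma> $ i > 0"
    and maxi: "is_maximizer \<alpha> \<beta> \<gamma> A q" and h1: "rf \<gamma> \<le> 1" and h2: "1 \<le> Rf \<gamma>"
  shows "q = \<gamma> \<and> A *v q = \<beta> \<and>
        ((\<not> (\<exists>\<sigma>::real^'n. (\<forall>i. \<sigma> $ i = 1 \<or> \<sigma> $ i = -1) \<and> \<sigma> \<bullet> \<gamma> = 1)) \<longrightarrow> rank A \<ge> 2)"
proof -
  have Au: "A \<in> unitcols" and qn: "\<forall>i. q$i \<ge> 0"
    and opt: "\<And>A' q'. A' \<in> unitcols \<Longrightarrow> (\<forall>i. q'$i \<ge> 0) \<Longrightarrow> Omega \<alpha> \<beta> \<gamma> A' q' \<le> Omega \<alpha> \<beta> \<gamma> A q"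
    using maxi unfolding is_maximizer_def by auto
  have au: "\<forall>k. norm (column k A) = 1" using Au unfolding unitcols_def by simp
  have l1: "l1norm \<gamma> = (\<Sum>i\<in>UNIV. \<gamma>$i)" unfolding l1norm_def using gamma
    by (intro sum.cong) (auto simp: less_imp_le)
  have gk: "\<gamma>$k \<le> linfnorm \<gamma>" for k unfolding linfnorm_def
    by (rule order_trans[OF abs_ge_self Max_ge]) auto
  have lo: "\<forall>k. 2 * \<gamma>$k - (\<Sum>i\<in>UNIV. \<gamma>$i) \<le> 1"
  proof
    fix k show "2 * \<gamma>$k - (\<Sum>i\<in>UNIV. \<gamma>$i) \<le> 1" using h1 gk[of k] unfolding rf_def l1 by linarith
  qed
  have hi: "1 \<le> (\<Sum>i\<in>UNIV. \<gamma>$i)" using h2 unfolding Rf_def l1 .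
  obtain B where Bu: "B \<in> unitcols" and Bg: "B *v \<gamma> = \<beta>" using reach_beta[OF m2 beta gamma lo hi] by blast
  have OmB: "Omega \<alpha> \<beta> \<gamma> B \<gamma> = \<alpha> * (1/2) + 1/2 * (\<Sum>i\<in>UNIV. (\<gamma>$i)^2)"
    unfolding Omega_alt[OF beta] Bg by simp
  have G: "Omega \<alpha> \<beta> \<gamma> B \<gamma> \<le> Omega \<alpha> \<beta> \<gamma> A q" using opt[OF Bu] gamma by (simp add: less_imp_le)
  define x where "x = A *v q"
  have OmA: "Omega \<alpha> \<beta> \<gamma> A q = \<alpha> * (1/2 - 1/2 * (norm (x - \<beta>))^2) + 1/2 * (\<Sum>i\<in>UNIV. (\<gamma>$i)^2)
     - 1/2 * (\<Sum>i\<in>UNIV. (q$i - \<gamma>$i)^2)" unfolding x_def by (rule Omega_alt[OF beta])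
  have D0: "(\<Sum>i\<in>UNIV. (q$i - \<gamma>$i)^2) \<ge> 0" by (simp add: sum_nonneg)
  have n0: "\<alpha> * (norm (x - \<beta>))^2 \<ge> 0" using alpha by simp
  have "\<alpha> * (norm (x - \<beta>))^2 + (\<Sum>i\<in>UNIV. (q$i - \<gamma>$i)^2) \<le> 0"
    using G unfolding OmB OmA by (simp add: right_diff_distrib)
  then have e1: "\<alpha> * (norm (x - \<beta>))^2 = 0" and e2: "(\<Sum>i\<in>UNIV. (q$i - \<gamma>$i)^2) \<le> 0"
    using D0 n0 by linarith+
  have qg: "q = \<gamma>" using e2 by (rule sum_sq_zero)
  have xb: "x = \<beta>" using e1 alpha by simp
  have rk: "rank A \<ge> 2" if nos: "\<not> (\<exists>\<sigma>::real^'n. (\<forall>i. \<sigma> $ i = 1 \<or> \<sigma> $ i = -1) \<and> \<sigma> \<bullet> \<gamma> = 1)"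
  proof -
    obtain i0 :: 'n where True by simp
    show ?thesis
    proof (cases "\<forall>k. column k A = column i0 A \<or> column k A = - column i0 A")
      case True
      define \<sigma> :: "real^'n" where "\<sigma> = (\<chi> k. if column k A = column i0 A then 1 else -1)"
      have s1: "\<forall>i. \<sigma> $ i = 1 \<or> \<sigma> $ i = -1" unfolding \<sigma>_def by simp
      have ck: "column k A = \<sigma>$k *\<^sub>R column i0 A" for k
        using True[rule_format, of k] unfolding \<sigma>_def by auto
      have "\<beta> = (\<Sum>k\<in>UNIV. \<gamma>$k *\<^sub>R (\<sigma>$k *\<^sub>R column i0 A))"
        using xb qg unfolding x_def mv_sum by (metis (no_types, lifting) ck sum.cong)
      also have "\<dots> = (\<sigma> \<bullet> \<gamma>) *\<^sub>R column i0 A"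
        by (simp add: inner_vec_def scaleR_sum_left mult.commute)
      finally have "norm \<beta> = \<bar>\<sigma> \<bullet> \<gamma>\<bar>" using au by simp
      then have "\<sigma> \<bullet> \<gamma> = 1 \<or> \<sigma> \<bullet> \<gamma> = -1" using beta by auto
      moreover have "(- \<sigma>) \<bullet> \<gamma> = - (\<sigma> \<bullet> \<gamma>)" by simp
      moreover have "\<forall>i. (- \<sigma>) $ i = 1 \<or> (- \<sigma>) $ i = -1" using s1 by auto
      ultimately have "\<exists>\<sigma>::real^'n. (\<forall>i. \<sigma> $ i = 1 \<or> \<sigma> $ i = -1) \<and> \<sigma> \<bullet> \<gamma> = 1"
      proof (elim disjE)
        assume "\<sigma> \<bullet> \<gamma> = 1" then show ?thesis using s1 by blast
      next
        assume "\<sigma> \<bullet> \<gamma> = -1"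
        then have "(- \<sigma>) \<bullet> \<gamma> = 1" by simp
        then show ?thesis using \<open>\<forall>i. (- \<sigma>) $ i = 1 \<or> (- \<sigma>) $ i = -1\<close> by blast
      qed
      then show ?thesis using nos by blast
    next
      case False
      then obtain k where k1: "column k A \<noteq> column i0 A" and k2: "column k A \<noteq> - column i0 A" by blast
      have nz: "column k A \<noteq> 0" using au by (metis norm_zero zero_neq_one)
      have nsp: "column i0 A \<notin> span {column k A}"
      proof
        assume "column i0 A \<in> span {column k A}"
        then obtain t where t: "column i0 A = t *\<^sub>R column k A" unfolding real_vector.span_singleton by blast
        then have "norm (column i0 A) = \<bar>t\<bar> * norm (column k A)" by simp
        then have "\<bar>t\<bar> = 1" using au by simp
        then have "t = 1 \<or> t = -1" by auto
        then show False using t k1 k2 by auto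
      qed
      have ind: "independent {column i0 A, column k A}"
        using nsp nz by (simp add: independent_insert)
      have "card {column i0 A, column k A} \<le> dim (columns A)"
        by (rule independent_card_le_dim[OF _ ind]) (auto simp: columns_def)
      then show ?thesis using k1 unfolding column_rank_def by simp
    qed
  qed
  show ?thesis using qg xb rk unfolding x_def by simp
qed

theorem proposition2:
  fixes \<alpha> :: real and \<beta> :: "real^'m" and \<gamma> :: "real^'n"
    and A :: "real^'n^'m" and q :: "real^'n"
  assumes n2: "CARD('n) \<ge> 2" and m2: "CARD('m) \<ge> 2"
    and alpha: "\<alpha> > 0" and beta: "norm \<beta> = 1" and gamma: "\<forall>i. \<gamma> $ i > 0"
    and maxi: "is_maximizer \<alpha> \<beta> \<gamma> A q"
  shows
    "(rf \<gamma> \<le> 1 \<and> 1 \<le> Rf \<gamma> \<longrightarrow>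
        q = \<gamma> \<and> A *v q = \<beta> \<and>
        ((\<not> (\<exists>\<sigma>::real^'n. (\<forall>i. \<sigma> $ i = 1 \<or> \<sigma> $ i = -1) \<and> \<sigma> \<bullet> \<gamma> = 1)) \<longrightarrow> rank A \<ge> 2))
     \<and>
     (Rf \<gamma> \<le> 1 \<longrightarrow>
        (\<forall>i. q $ i = \<gamma> $ i + \<alpha> * (1 - Rf \<gamma>) / (1 + real CARD('n) * \<alpha>)) \<and>
        A *v q = Rf q *\<^sub>R \<beta> \<and>
        (\<forall>i. column i A = \<beta>))
     \<and>
     (\<forall>i. rf \<gamma> \<ge> 1 \<and> \<gamma> $ i = linfnorm \<gamma> \<longrightarrow>
        q $ i = \<gamma> $ i - \<alpha> * (rf \<gamma> - 1) / (1 + real CARD('n) * \<alpha>) \<and>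
        (\<forall>j. j \<noteq> i \<longrightarrow> q $ j = \<gamma> $ j + \<alpha> * (rf \<gamma> - 1) / (1 + real CARD('n) * \<alpha>)) \<and>
        A *v q = rf q *\<^sub>R \<beta> \<and>
        column i A = \<beta> \<and> (\<forall>j. j \<noteq> i \<longrightarrow> column j A = - \<beta>))"
proof -
  have p1: "rf \<gamma> \<le> 1 \<and> 1 \<le> Rf \<gamma> \<longrightarrow> q = \<gamma> \<and> A *v q = \<beta> \<and>
        ((\<not> (\<exists>\<sigma>::real^'n. (\<forall>i. \<sigma> $ i = 1 \<or> \<sigma> $ i = -1) \<and> \<sigma> \<bullet> \<gamma> = 1)) \<longrightarrow> rank A \<ge> 2)"
    using part1[OF m2 alpha beta gamma maxi] by blast
  have p2: "Rf \<gamma> \<le> 1 \<longrightarrow> (\<forall>i. q $ i = \<gamma> $ i + \<alpha> * (1 - Rf \<gamma>) / (1 + real CARD('n) * \<alpha>)) \<and>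
        A *v q = Rf q *\<^sub>R \<beta> \<and>
        (\<forall>i. column i A = \<beta>)"
    using part2[OF alpha beta gamma maxi] by blast
  have p3: "\<forall>i. rf \<gamma> \<ge> 1 \<and> \<gamma> $ i = linfnorm \<gamma> \<longrightarrow> q $ i = \<gamma> $ i - \<alpha> * (rf \<gamma> - 1) / (1 + real CARD('n) * \<alpha>) \<and>
        (\<forall>j. j \<noteq> i \<longrightarrow> q $ j = \<gamma> $ j + \<alpha> * (rf \<gamma> - 1) / (1 + real CARD('n) * \<alpha>)) \<and>
        A *v q = rf q *\<^sub>R \<beta> \<and>
        column i A = \<beta> \<and> (\<forall>j. j \<noteq> i \<longrightarrow> column j A = - \<beta>)"
    using part3[OF alpha beta gamma maxi] by blast
  show ?thesis using p1 p2 p3 by (intro conjI)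
qed

end
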